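(* Let $p\ge3$ be a prime which is not a Wieferich prime. Then $P(p^k,n)=p^{k-1}P(p,n)$ for all positive integers $k$ and $n$.
   Context: For positive integers $m,n$, let $\mathbf{Z}_m$ be the integers modulo $m$ and $T:\mathbf{Z}_m^n\to\mathbf{Z}_m^n$, $T(a_0,\dots,a_{n-1})=(a_0+a_1,a_1+a_2,\dots,a_{n-1}+a_0)$. For $\mathbf{a}\in\mathbf{Z}_m^n$ the cycle length of $(T^k\mathbf{a})_{k\ge0}$ is the smallest positive integer $P$ such that there is $N$ with $T^{k+P}\mathbf{a}=T^k\mathbf{a}$ for all $k\ge N$. $P(m,n)$ denotes the maximum of these cycle lengths over all $\mathbf{a}\in\mathbf{Z}_m^n$. A prime $p$ is a Wieferich prime if $2^{p-1}\equiv1\pmod{p^2}$. *)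

theory Defs
  imports "HOL-Number_Theory.Number_Theory"
begin

text \<open>Elements of Z_m^n are represented as functions a :: nat => nat with
  a i \<in> {0..<m} for i < n, and a i = 0 for i \<ge> n (canonical representatives).\<close>

definition vecs :: "nat \<Rightarrow> nat \<Rightarrow> (nat \<Rightarrow> nat) set" where
  "vecs m n = {a. (\<forall>i<n. a i < m) \<and> (\<forall>i\<ge>n. a i = 0)}"

definition Tmap :: "nat \<Rightarrow> nat \<Rightarrow> (nat \<Rightarrow> nat) \<Rightarrow> (nat \<Rightarrow> nat)" where
  "Tmap m n a = (\<lambda>i. if i < n then (a i + a ((i + 1) mod n)) mod m else 0)"

definition cycle_len :: "nat \<Rightarrow> nat \<Rightarrow> (nat \<Rightarrow> nat) \<Rightarrow> nat" where
  "cycle_len m n a = (LEAST P. P > 0 \<and>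
      (\<exists>N. \<forall>k\<ge>N. (Tmap m n ^^ (k + P)) a = (Tmap m n ^^ k) a))"

definition Pmax :: "nat \<Rightarrow> nat \<Rightarrow> nat" where
  "Pmax m n = Max (cycle_len m n ` vecs m n)"

definition wieferich :: "nat \<Rightarrow> bool" where
  "wieferich p \<longleftrightarrow> prime p \<and> [2 ^ (p - 1) = 1] (mod p ^ 2)"

end

theory Submission
  imports Defs "HOL-Computational_Algebra.Polynomial"
begin


definition Xn :: "nat \<Rightarrow> int poly" where "Xn n = monom 1 n - 1"
definition inI :: "int \<Rightarrow> nat \<Rightarrow> int poly \<Rightarrow> bool" where
  "inI q n h \<longleftrightarrow> (\<exists>a b. h = smult q a + Xn n * b)"

lemma inI_add: "inI q n f \<Longrightarrow> inI q n g \<Longrightarrow> inI q n (f + g)"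
proof -
  assume "inI q n f" "inI q n g"
  then obtain a b a' b' where "f = smult q a + Xn n * b" "g = smult q a' + Xn n * b'" unfolding inI_def by auto
  hence "f + g = smult q (a + a') + Xn n * (b + b')" by (simp add: algebra_simps smult_add_right)
  thus ?thesis unfolding inI_def by blast
qed

lemma inI_neg: "inI q n f \<Longrightarrow> inI q n (- f)"
proof -
  assume "inI q n f" then obtain a b where "f = smult q a + Xn n * b" unfolding inI_def by auto
  hence "- f = smult q (-a) + Xn n * (-b)" by simp
  thus ?thesis unfolding inI_def by blast
qed

lemma inI_diff: "inI q n f \<Longrightarrow> inI q n g \<Longrightarrow> inI q n (f - g)"
  using inI_add[of q n f "-g"] inI_neg by auto

lemma inI_mult: "inI q n f \<Longrightarrow> inI q n (g * f)"
proof -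
  assume "inI q n f"
  then obtain a b where "f = smult q a + Xn n * b" unfolding inI_def by auto
  hence "g * f = smult q (g * a) + Xn n * (g * b)" by (simp add: algebra_simps)
  thus ?thesis unfolding inI_def by blast
qed

lemma inI_mult2: "inI q n f \<Longrightarrow> inI q n (f * g)"
  using inI_mult[of q n f g] by (simp add: mult.commute)

lemma inI_0[simp]: "inI q n 0"
  unfolding inI_def by (rule exI[of _ 0], rule exI[of _ 0]) simp

lemma inI_smult_dvd: "q dvd c \<Longrightarrow> inI q n (smult c a)"
  unfolding inI_def by (rule exI[of _ "smult (c div q) a"], rule exI[of _ 0]) simp

lemma inI_Xn: "inI q n (Xn n * b)"
  unfolding inI_def by (rule exI[of _ 0], rule exI[of _ b]) simp

lemma inI_dvd: "q' dvd q \<Longrightarrow> inI q n f \<Longrightarrow> inI q' n f"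
proof -
  assume "q' dvd q" "inI q n f"
  then obtain c where "q = q' * c" by auto
  moreover obtain a b where "f = smult q a + Xn n * b" using \<open>inI q n f\<close> unfolding inI_def by auto
  ultimately have "f = smult q' (smult c a) + Xn n * b" by simp
  thus ?thesis unfolding inI_def by blast
qed

lemma inI_zero: "inI 0 n f \<Longrightarrow> inI q n f"
  using inI_dvd by auto

lemma inI_smult: "inI q n f \<Longrightarrow> inI (c * q) n (smult c f)"
proof -
  assume "inI q n f"
  then obtain a b where "f = smult q a + Xn n * b" unfolding inI_def by auto
  hence "smult c f = smult (c * q) a + Xn n * smult c b" by (simp add: smult_add_right)
  thus ?thesis unfolding inI_def by blast
qed

lemma inI_sum: "(\<And>i. i \<in> A \<Longrightarrow> inI q n (f i)) \<Longrightarrow> inI q n (\<Sum>i\<in>A. f i)"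
  by (induction A rule: infinite_finite_induct) (auto intro: inI_add)

lemma one_dvd_pow: "(x - 1) dvd (x ^ k - (1::'a::comm_ring_1))"
proof (induction k)
  case (Suc k)
  have e: "x ^ Suc k - 1 = x * (x ^ k - 1) + (x - 1)" by (simp add: algebra_simps)
  show ?case unfolding e using Suc.IH by (intro dvd_add dvd_mult) auto
qed simp

lemma Xn_dvd: "d dvd n \<Longrightarrow> Xn d dvd Xn n"
proof -
  assume "d dvd n" then obtain c where "n = d * c" by auto
  hence "monom (1::int) n = (monom 1 d) ^ c" by (simp add: monom_power)
  thus ?thesis unfolding Xn_def using one_dvd_pow[of "monom (1::int) d" c] by simp
qed

lemma inI_quot: "d dvd n \<Longrightarrow> inI q n f \<Longrightarrow> inI q d f"
proof -
  assume "d dvd n" "inI q n f"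
  then obtain a b where ab: "f = smult q a + Xn n * b" unfolding inI_def by auto
  obtain c where "Xn n = Xn d * c" using Xn_dvd[OF \<open>d dvd n\<close>] by auto
  hence "f = smult q a + Xn d * (c * b)" using ab by (simp add: mult.assoc)
  thus ?thesis unfolding inI_def by blast
qed

lemma monom_cong: "inI 0 n (monom c (i + n * t) - monom c i)"
proof -
  have "monom c (i + n * t) - monom c i = monom c i * ((monom 1 n)^t - 1)"
    by (simp add: monom_power mult_monom algebra_simps)
  moreover obtain d where "(monom 1 n)^t - 1 = Xn n * d" using one_dvd_pow[of "monom (1::int) n" t]
    unfolding Xn_def by auto
  ultimately show ?thesis using inI_Xn[of 0 n "monom c i * d"] by (simp add: algebra_simps)
qed

definition cg where "cg q n f g \<longleftrightarrow> inI q n (f - g)"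

lemma cg_refl[simp]: "cg q n f f" by (simp add: cg_def)
lemma cg_sym: "cg q n f g \<Longrightarrow> cg q n g f" unfolding cg_def using inI_neg by fastforce
lemma cg_trans: "cg q n f g \<Longrightarrow> cg q n g h \<Longrightarrow> cg q n f h"
  unfolding cg_def using inI_add by fastforce
lemma cg_add: "cg q n f g \<Longrightarrow> cg q n f' g' \<Longrightarrow> cg q n (f + f') (g + g')"
  unfolding cg_def using inI_add by (fastforce simp: algebra_simps)
lemma cg_diff: "cg q n f g \<Longrightarrow> cg q n f' g' \<Longrightarrow> cg q n (f - f') (g - g')"
  unfolding cg_def using inI_diff by (fastforce simp: algebra_simps)
lemma cg_mult: "cg q n f g \<Longrightarrow> cg q n f' g' \<Longrightarrow> cg q n (f * f') (g * g')"
proof -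
  assume a: "cg q n f g" "cg q n f' g'"
  have "f * f' - g * g' = (f - g) * f' + g * (f' - g')" by (simp add: algebra_simps)
  thus ?thesis using a unfolding cg_def by (metis inI_add inI_mult inI_mult2)
qed
lemma cg_pow: "cg q n f g \<Longrightarrow> cg q n (f ^ k) (g ^ k)"
  by (induction k) (auto intro: cg_mult)
lemma cg_zero: "cg 0 n f g \<Longrightarrow> cg q n f g" unfolding cg_def using inI_zero by auto
lemma cg_dvd: "q' dvd q \<Longrightarrow> cg q n f g \<Longrightarrow> cg q' n f g" unfolding cg_def using inI_dvd by auto
lemma cg_quot: "d dvd n \<Longrightarrow> cg q n f g \<Longrightarrow> cg q d f g" unfolding cg_def using inI_quot by auto
lemma cg_inI: "cg q n f g \<Longrightarrow> inI q n f \<longleftrightarrow> inI q n g"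
  unfolding cg_def using inI_diff[of q n f "f - g"] inI_add[of q n "f - g" g] by auto



definition red :: "nat \<Rightarrow> int poly \<Rightarrow> int poly" where
  "red n f = (\<Sum>i\<le>degree f. monom (coeff f i) (i mod n))"

lemma red_alt: "degree f \<le> D \<Longrightarrow> red n f = (\<Sum>i\<le>D. monom (coeff f i) (i mod n))"
  unfolding red_def
  by (rule sum.mono_neutral_left) (auto simp: coeff_eq_0)

lemma red_add: "red n (f + g) = red n f + red n g"
proof -
  let ?D = "max (degree f) (degree g)"
  have "red n (f + g) = (\<Sum>i\<le>?D. monom (coeff (f + g) i) (i mod n))"
    by (rule red_alt) (simp add: degree_add_le)
  also have "\<dots> = (\<Sum>i\<le>?D. monom (coeff f i) (i mod n)) + (\<Sum>i\<le>?D. monom (coeff g i) (i mod n))"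
    by (simp add: add_monom[symmetric] sum.distrib)
  also have "\<dots> = red n f + red n g" using red_alt[of f ?D n] red_alt[of g ?D n] by simp
  finally show ?thesis .
qed

lemma smult_sum_r: "smult c (\<Sum>i\<in>A. f i) = (\<Sum>i\<in>A. smult c (f i))"
  by (induction A rule: infinite_finite_induct) (auto simp: smult_add_right)

lemma red_smult: "red n (smult c f) = smult c (red n f)"
proof -
  have "red n (smult c f) = (\<Sum>i\<le>degree f. monom (coeff (smult c f) i) (i mod n))"
    by (rule red_alt) simp
  also have "\<dots> = (\<Sum>i\<le>degree f. smult c (monom (coeff f i) (i mod n)))"
    by (simp add: smult_monom)
  also have "\<dots> = smult c (red n f)"
    unfolding red_def by (simp add: smult_sum_r)
  finally show ?thesis .
qed

lemma red_neg: "red n (- f) = - red n f"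
  using red_smult[of n "-1" f] by simp

lemma red_diff: "red n (f - g) = red n f - red n g"
  using red_add[of n f "-g"] red_neg[of n g] by simp

lemma red_zero[simp]: "red n 0 = 0" by (simp add: red_def)

lemma red_sum: "red n (\<Sum>i\<in>A. f i) = (\<Sum>i\<in>A. red n (f i))"
  by (induction A rule: infinite_finite_induct) (auto simp: red_add)

lemma red_monom: "red n (monom c i) = monom c (i mod n)"
proof -
  have "red n (monom c i) = (\<Sum>j\<le>i. monom (coeff (monom c i) j) (j mod n))"
    by (rule red_alt) (simp add: degree_monom_le)
  also have "\<dots> = (\<Sum>j\<le>i. if j = i then monom c (i mod n) else 0)"
    by (rule sum.cong) (auto simp: coeff_monom)
  finally show ?thesis by simp
qed

lemma red_monom_mult: "red n (monom 1 k * f) = (\<Sum>i\<le>degree f. monom (coeff f i) ((k + i) mod n))"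
proof -
  have "monom 1 k * f = monom 1 k * (\<Sum>i\<le>degree f. monom (coeff f i) i)"
    by (simp add: poly_as_sum_of_monoms)
  also have "\<dots> = (\<Sum>i\<le>degree f. monom (coeff f i) (k + i))"
    by (simp add: sum_distrib_left mult_monom)
  finally show ?thesis by (simp add: red_sum red_monom)
qed

lemma red_Xn: "red n (Xn n * b) = 0"
proof -
  have "red n (monom 1 n * b) = red n b"
    by (subst red_monom_mult) (simp add: red_def)
  thus ?thesis unfolding Xn_def by (simp add: algebra_simps red_diff)
qed

lemma coeff_red: "coeff (red n f) j = (\<Sum>i\<le>degree f. if i mod n = j then coeff f i else 0)"
  unfolding red_def coeff_sum by (rule sum.cong) (auto simp: coeff_monom)

lemma coeff_red_ge: "0 < n \<Longrightarrow> n \<le> j \<Longrightarrow> coeff (red n f) j = 0"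
proof -
  assume "0 < n" "n \<le> j"
  hence "\<forall>i. i mod n \<noteq> j" by (metis mod_less_divisor not_le)
  thus ?thesis unfolding coeff_red by simp
qed

lemma inI_red: "0 < n \<Longrightarrow> inI 0 n (f - red n f)"
proof -
  assume n: "0 < n"
  have "f - red n f = (\<Sum>i\<le>degree f. monom (coeff f i) (i mod n + n * (i div n)) - monom (coeff f i) (i mod n))"
    by (simp add: red_def sum_subtractf poly_as_sum_of_monoms)
  also have "inI 0 n \<dots>"
    by (rule inI_sum) (rule monom_cong)
  finally show ?thesis .
qed

lemma inI_iff: "0 < n \<Longrightarrow> inI q n f \<longleftrightarrow> (\<forall>j. q dvd coeff (red n f) j)"
proof
  assume "inI q n f"
  then obtain a b where "f = smult q a + Xn n * b" unfolding inI_def by auto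
  hence "red n f = smult q (red n a)" by (simp add: red_add red_smult red_Xn)
  thus "\<forall>j. q dvd coeff (red n f) j" by simp
next
  assume n: "0 < n" and d: "\<forall>j. q dvd coeff (red n f) j"
  define A where "A = map_poly (\<lambda>c. c div q) (red n f)"
  have "red n f = smult q A"
    by (rule poly_eqI) (use d in \<open>auto simp: A_def coeff_map_poly\<close>)
  moreover obtain a b where "f - red n f = smult 0 a + Xn n * b" using inI_red[OF n, of f]
    unfolding inI_def by auto
  ultimately have "f = smult q A + Xn n * b" by (simp add: algebra_simps)
  thus "inI q n f" unfolding inI_def by blast
qed

lemma inI_eval1: "inI q n f \<Longrightarrow> q dvd poly f 1"
  unfolding inI_def Xn_def by (auto simp: poly_monom)

lemma inI_cancel: "0 < n \<Longrightarrow> inI q n (smult c f) \<Longrightarrow> coprime c q \<Longrightarrow> inI q n f"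
  by (auto simp: inI_iff red_smult coprime_dvd_mult_right_iff coprime_commute)

lemma inI_cancel2: "0 < n \<Longrightarrow> inI (c * q) n (smult c f) \<Longrightarrow> c \<noteq> 0 \<Longrightarrow> inI q n f"
  by (auto simp: inI_iff red_smult)



definition w :: "nat \<Rightarrow> int poly" where "w n = 1 + monom 1 (n - 1)"
definition vec :: "nat \<Rightarrow> nat \<Rightarrow> int poly \<Rightarrow> nat \<Rightarrow> nat" where
  "vec m n f = (\<lambda>i. if i < n then nat (coeff (red n f) i mod int m) else 0)"
definition good :: "int \<Rightarrow> nat \<Rightarrow> nat \<Rightarrow> bool" where
  "good q n P \<longleftrightarrow> P > 0 \<and> (\<exists>N. cg q n (w n ^ (N + P)) (w n ^ N))"
definition Per :: "int \<Rightarrow> nat \<Rightarrow> nat" where "Per q n = (LEAST P. good q n P)"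

lemma suc_mod_inj:
  fixes x i n :: nat
  assumes "x < n" "i < n" "(x + 1) mod n = (i + 1) mod n"
  shows "x = i"
proof -
  have h: "(y + 1) mod n = (if y + 1 = n then 0 else y + 1)" if "y < n" for y
    using that by auto
  show ?thesis using assms h[OF assms(1)] h[OF assms(2)] by (auto split: if_splits)
qed

lemma mod_shift_iff:
  fixes n i l :: nat
  assumes "0 < n" "i < n"
  shows "(n - 1 + l) mod n = i \<longleftrightarrow> l mod n = (i + 1) mod n"
proof -
  have e: "l mod n = ((n - 1 + l) mod n + 1) mod n"
  proof -
    have "n - 1 + l + 1 = l + n" using assms by simp
    hence "l mod n = (n - 1 + l + 1) mod n" by simp
    also have "\<dots> = ((n - 1 + l) mod n + 1) mod n" by (simp add: mod_Suc_eq)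
    finally show ?thesis .
  qed
  show ?thesis
  proof
    assume "(n - 1 + l) mod n = i" thus "l mod n = (i + 1) mod n" using e by simp
  next
    assume "l mod n = (i + 1) mod n"
    thus "(n - 1 + l) mod n = i" using e suc_mod_inj[of "(n - 1 + l) mod n" n i] assms by simp
  qed
qed

lemma coeff_red_shift:
  assumes "0 < n" "i < n"
  shows "coeff (red n (monom 1 (n - 1) * f)) i = coeff (red n f) ((i + 1) mod n)"
proof -
  have "coeff (red n (monom 1 (n - 1) * f)) i =
      (\<Sum>l\<le>degree f. if (n - 1 + l) mod n = i then coeff f l else 0)"
    unfolding red_monom_mult coeff_sum by (rule sum.cong) (auto simp: coeff_monom)
  also have "\<dots> = (\<Sum>l\<le>degree f. if l mod n = (i + 1) mod n then coeff f l else 0)"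
    using mod_shift_iff[OF assms] by simp
  also have "\<dots> = coeff (red n f) ((i + 1) mod n)" by (simp add: coeff_red)
  finally show ?thesis .
qed

lemma coeff_red_w:
  assumes "0 < n" "i < n"
  shows "coeff (red n (w n * f)) i = coeff (red n f) i + coeff (red n f) ((i + 1) mod n)"
proof -
  have "w n * f = f + monom 1 (n - 1) * f" by (simp add: w_def algebra_simps)
  thus ?thesis using coeff_red_shift[OF assms] by (simp add: red_add)
qed

lemma nat_mod_add: "0 < (m::int) \<Longrightarrow> nat ((x + y) mod m) = (nat (x mod m) + nat (y mod m)) mod nat m"
proof -
  assume m: "0 < m"
  have "int ((nat (x mod m) + nat (y mod m)) mod nat m) = (x mod m + y mod m) mod m"
    using m by (simp add: of_nat_mod)
  also have "\<dots> = (x + y) mod m" by (simp add: mod_add_eq)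
  finally show ?thesis by (metis nat_int)
qed

lemma vec_w: "0 < m \<Longrightarrow> 0 < n \<Longrightarrow> vec m n (w n * f) = Tmap m n (vec m n f)"
proof
  fix i assume m: "0 < m" and n: "0 < n"
  show "vec m n (w n * f) i = Tmap m n (vec m n f) i"
  proof (cases "i < n")
    case True
    have i1: "(i + 1) mod n < n" using n by simp
    have "vec m n (w n * f) i = nat ((coeff (red n f) i + coeff (red n f) ((i+1) mod n)) mod int m)"
      using True by (simp add: vec_def coeff_red_w[OF n True])
    also have "\<dots> = (nat (coeff (red n f) i mod int m) + nat (coeff (red n f) ((i+1) mod n) mod int m)) mod m"
      using nat_mod_add[of "int m" "coeff (red n f) i" "coeff (red n f) ((i+1) mod n)"] m by simp
    also have "\<dots> = Tmap m n (vec m n f) i"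
      using True i1 by (simp add: vec_def Tmap_def)
    finally show ?thesis .
  qed (simp add: vec_def Tmap_def)
qed

lemma vec_iter: "0 < m \<Longrightarrow> 0 < n \<Longrightarrow> (Tmap m n ^^ k) (vec m n f) = vec m n (w n ^ k * f)"
  by (induction k) (auto simp: vec_w mult.assoc)

lemma vec_eq_iff:
  assumes m: "0 < m" and n: "0 < n"
  shows "vec m n f = vec m n g \<longleftrightarrow> cg (int m) n f g"
proof
  assume e: "vec m n f = vec m n g"
  have "int m dvd coeff (red n (f - g)) j" for j
  proof (cases "j < n")
    case True
    hence "nat (coeff (red n f) j mod int m) = nat (coeff (red n g) j mod int m)"
      using fun_cong[OF e, of j] by (simp add: vec_def)
    hence "coeff (red n f) j mod int m = coeff (red n g) j mod int m"
      using m by (simp add: nat_eq_iff2)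
    thus ?thesis by (simp add: red_diff mod_eq_dvd_iff)
  next
    case False thus ?thesis using n by (simp add: coeff_red_ge)
  qed
  thus "cg (int m) n f g" unfolding cg_def using inI_iff[OF n] by blast
next
  assume "cg (int m) n f g"
  hence d: "int m dvd coeff (red n f) j - coeff (red n g) j" for j
    unfolding cg_def using inI_iff[OF n] by (simp add: red_diff)
  show "vec m n f = vec m n g"
  proof
    fix i
    have "coeff (red n f) i mod int m = coeff (red n g) i mod int m"
      using d[of i] mod_eq_dvd_iff by blast
    thus "vec m n f i = vec m n g i" unfolding vec_def by simp
  qed
qed

lemma vec_in: "0 < m \<Longrightarrow> vec m n f \<in> vecs m n"
  unfolding vecs_def vec_def by (auto simp: nat_less_iff)

lemma vec_surj:
  assumes "a \<in> vecs m n" "0 < n"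
  shows "\<exists>f. vec m n f = a"
proof -
  define f where "f = (\<Sum>i<n. monom (int (a i)) i)"
  have "red n f = f" unfolding f_def red_sum red_monom by simp
  have c0: "coeff f j = (\<Sum>i<n. if j = i then int (a i) else 0)" for j
    unfolding f_def coeff_sum by (intro sum.cong) (auto simp: coeff_monom)
  have c: "coeff (red n f) j = (if j < n then int (a j) else 0)" for j
    unfolding \<open>red n f = f\<close> c0 by simp
  have "vec m n f = a"
  proof
    fix i show "vec m n f i = a i"
      using assms(1) c[of i] unfolding vec_def vecs_def by auto
  qed
  thus ?thesis by blast
qed

lemma finite_vecs: "finite (vecs m n)"
proof -
  have "vecs m n = {f. \<forall>x. (x \<in> {..<n} \<longrightarrow> f x \<in> {..<m}) \<and> (x \<notin> {..<n} \<longrightarrow> f x = 0)}"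
    unfolding vecs_def by auto
  thus ?thesis using finite_set_of_finite_funs[of "{..<n}" "{..<m}" 0] by simp
qed

lemma good_ge: "cg q n (w n ^ (N + P)) (w n ^ N) \<Longrightarrow> N \<le> k \<Longrightarrow> cg q n (w n ^ (k + P)) (w n ^ k)"
proof -
  assume c: "cg q n (w n ^ (N + P)) (w n ^ N)" and k: "N \<le> k"
  have "cg q n (w n ^ (k - N) * w n ^ (N + P)) (w n ^ (k - N) * w n ^ N)"
    using c by (intro cg_mult) auto
  moreover have "k - N + (N + P) = k + P" "k - N + N = k" using k by auto
  ultimately show ?thesis by (simp add: power_add[symmetric])
qed

lemma Pmax_Per:
  assumes m: "1 < m" and n: "0 < n" and g: "good (int m) n P0"
  shows "Pmax m n = Per (int m) n"
proof -
  let ?Q = "Per (int m) n"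
  let ?cyc = "\<lambda>a P. P > 0 \<and> (\<exists>N. \<forall>k\<ge>N. (Tmap m n ^^ (k + P)) a = (Tmap m n ^^ k) a)"
  have gQ: "good (int m) n ?Q" unfolding Per_def by (rule LeastI[of _ P0]) (rule g)
  have m0: "0 < m" using m by simp
  have cyc_of_good: "?cyc (vec m n f) P" if "good (int m) n P" for f P
  proof -
    have "P > 0" "\<exists>N. cg (int m) n (w n ^ (N + P)) (w n ^ N)" using that unfolding good_def by auto
    then obtain N where N: "cg (int m) n (w n ^ (N + P)) (w n ^ N)" "P > 0" by blast
    have "\<forall>k\<ge>N. (Tmap m n ^^ (k + P)) (vec m n f) = (Tmap m n ^^ k) (vec m n f)"
    proof (intro allI impI)
      fix k assume "N \<le> k"
      hence "cg (int m) n (w n ^ (k + P) * f) (w n ^ k * f)"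
        using good_ge[OF N(1)] by (intro cg_mult) auto
      thus "(Tmap m n ^^ (k + P)) (vec m n f) = (Tmap m n ^^ k) (vec m n f)"
        by (simp add: vec_iter[OF m0 n] vec_eq_iff[OF m0 n])
    qed
    thus ?thesis using N by blast
  qed
  have le: "cycle_len m n a \<le> ?Q" if av: "a \<in> vecs m n" for a
  proof -
    obtain f where f: "vec m n f = a" using vec_surj[OF av n] by blast
    show ?thesis unfolding cycle_len_def using cyc_of_good[OF gQ, of f] f
      by (intro Least_le) auto
  qed
  have c1: "?cyc (vec m n 1) (cycle_len m n (vec m n 1))"
    unfolding cycle_len_def by (rule LeastI_ex) (use cyc_of_good[OF gQ, of 1] in blast)
  then obtain N where N: "cycle_len m n (vec m n 1) > 0"
    "\<forall>k\<ge>N. (Tmap m n ^^ (k + cycle_len m n (vec m n 1))) (vec m n 1) = (Tmap m n ^^ k) (vec m n 1)"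
    by blast
  hence "good (int m) n (cycle_len m n (vec m n 1))"
    unfolding good_def using N(2)[rule_format, of N]
    by (auto simp: vec_iter[OF m0 n] vec_eq_iff[OF m0 n])
  hence ge: "?Q \<le> cycle_len m n (vec m n 1)" unfolding Per_def by (rule Least_le)
  have "Max (cycle_len m n ` vecs m n) = ?Q"
  proof (rule Max_eqI)
    show "finite (cycle_len m n ` vecs m n)" using finite_vecs by simp
    show "\<And>y. y \<in> cycle_len m n ` vecs m n \<Longrightarrow> y \<le> ?Q" using le by auto
    show "?Q \<in> cycle_len m n ` vecs m n"
      using le[OF vec_in[OF m0, of n 1]] ge vec_in[OF m0, of n 1] by (metis image_eqI le_antisym)
  qed
  thus ?thesis unfolding Pmax_def .
qed



lemma cg_sum: "(\<And>k. k \<in> A \<Longrightarrow> cg q n (f k) (g k)) \<Longrightarrow> cg q n (\<Sum>k\<in>A. f k) (\<Sum>k\<in>A. g k)"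
  by (induction A rule: infinite_finite_induct) (auto intro: cg_add)

lemma of_nat_mult_poly: "(of_nat c :: int poly) * x = smult (int c) x"
  by (simp add: of_nat_poly)

lemma binom_expand:
  fixes W F H :: "int poly"
  assumes WF: "cg 0 n (W * F) (smult t H)" and L: "1 \<le> L"
    and d: "\<And>k. 2 \<le> k \<Longrightarrow> k \<le> L \<Longrightarrow> t' dvd int (L choose k) * t ^ k"
  shows "inI t' n (W ^ L * ((1 + F) ^ L - 1) - smult (int L * t) (W ^ (L - 1) * H))"
proof -
  have "(F + 1) ^ L = (\<Sum>k\<le>L. of_nat (L choose k) * F ^ k)"
    by (simp add: binomial_ring)
  also have "{..L} = insert 0 {1..L}" by auto
  finally have e1: "(1 + F) ^ L - 1 = (\<Sum>k\<in>{1..L}. of_nat (L choose k) * F ^ k)"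
    by (simp add: add.commute)
  have e2: "W ^ L * (of_nat (L choose k) * F ^ k) = of_nat (L choose k) * W ^ (L - k) * (W * F) ^ k"
    if "k \<in> {1..L}" for k
  proof -
    have "W ^ L = W ^ (L - k) * W ^ k" using that by (simp add: power_add[symmetric])
    thus ?thesis by (simp add: power_mult_distrib algebra_simps)
  qed
  have "W ^ L * ((1 + F) ^ L - 1) = (\<Sum>k\<in>{1..L}. of_nat (L choose k) * W ^ (L - k) * (W * F) ^ k)"
    unfolding e1 sum_distrib_left by (rule sum.cong[OF refl]) (rule e2)
  moreover have "cg 0 n (\<Sum>k\<in>{1..L}. of_nat (L choose k) * W ^ (L - k) * (W * F) ^ k)
     (\<Sum>k\<in>{1..L}. smult (int (L choose k) * t ^ k) (W ^ (L - k) * H ^ k))"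
  proof (rule cg_sum)
    fix k
    have "cg 0 n (of_nat (L choose k) * W ^ (L - k) * (W * F) ^ k) (of_nat (L choose k) * W ^ (L - k) * (smult t H) ^ k)"
      by (intro cg_mult cg_pow WF cg_refl)
    thus "cg 0 n (of_nat (L choose k) * W ^ (L - k) * (W * F) ^ k) (smult (int (L choose k) * t ^ k) (W ^ (L - k) * H ^ k))"
      by (simp add: of_nat_mult_poly smult_power mult_ac)
  qed
  ultimately have c: "cg 0 n (W ^ L * ((1 + F) ^ L - 1)) (\<Sum>k\<in>{1..L}. smult (int (L choose k) * t ^ k) (W ^ (L - k) * H ^ k))"
    by simp
  have "{1..L} = insert 1 {2..L}" using L by auto
  hence s: "(\<Sum>k\<in>{1..L}. smult (int (L choose k) * t ^ k) (W ^ (L - k) * H ^ k))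
      = smult (int L * t) (W ^ (L - 1) * H) + (\<Sum>k\<in>{2..L}. smult (int (L choose k) * t ^ k) (W ^ (L - k) * H ^ k))"
    by simp
  have r: "inI t' n (\<Sum>k\<in>{2..L}. smult (int (L choose k) * t ^ k) (W ^ (L - k) * H ^ k))"
    by (rule inI_sum) (auto intro!: inI_smult_dvd d)
  let ?X = "W ^ L * ((1 + F) ^ L - 1)"
  let ?A = "smult (int L * t) (W ^ (L - 1) * H)"
  let ?B = "\<Sum>k\<in>{2..L}. smult (int (L choose k) * t ^ k) (W ^ (L - k) * H ^ k)"
  have "cg t' n ?X (?A + ?B)"
    using cg_zero[OF c] s by simp
  hence i1: "inI t' n (?X - (?A + ?B))" unfolding cg_def .
  have eq: "?X - ?A = (?X - (?A + ?B)) + ?B" by simp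
  show ?thesis by (subst eq) (rule inI_add[OF i1 r])
qed

lemma good_pos: "good q n P \<Longrightarrow> P > 0" by (simp add: good_def)

lemma good_inI: "good q n P \<longleftrightarrow> P > 0 \<and> (\<exists>N. inI q n (w n ^ N * (w n ^ P - 1)))"
  unfolding good_def cg_def by (simp add: power_add algebra_simps)

lemma good_Per: "good q n P \<Longrightarrow> good q n (Per q n)"
  unfolding Per_def by (rule LeastI)

lemma good_mono: "good q n P \<Longrightarrow> N \<le> k \<Longrightarrow> cg q n (w n ^ (N + P)) (w n ^ N) \<Longrightarrow> cg q n (w n ^ (k + P)) (w n ^ k)"
  using good_ge by blast

lemma good_mult: "good q n P \<Longrightarrow> 0 < c \<Longrightarrow> good q n (c * P)"
proof -
  assume g: "good q n P" and c: "0 < c"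
  then obtain N where N: "cg q n (w n ^ (N + P)) (w n ^ N)" unfolding good_def by auto
  have "cg q n (w n ^ (N + j * P)) (w n ^ N)" for j
  proof (induction j)
    case (Suc j)
    have "cg q n (w n ^ (N + j * P + P)) (w n ^ (N + j * P))" by (rule good_ge[OF N]) simp
    moreover have eq: "N + Suc j * P = N + j * P + P" by simp
    ultimately have "cg q n (w n ^ (N + Suc j * P)) (w n ^ (N + j * P))" by (simp only: eq)
    thus ?case using Suc cg_trans by blast
  qed simp
  thus ?thesis using g c unfolding good_def by auto
qed

lemma good_dvd: "good q n P \<Longrightarrow> q' dvd q \<Longrightarrow> good q' n P"
  unfolding good_def using cg_dvd by blast

lemma Per_dvd:
  assumes g: "good q n P" shows "Per q n dvd P"
proof -
  let ?L = "Per q n"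
  have gL: "good q n ?L" by (rule good_Per[OF g])
  obtain N1 where N1: "cg q n (w n ^ (N1 + P)) (w n ^ N1)" using g unfolding good_def by auto
  obtain N2 where N2: "cg q n (w n ^ (N2 + ?L)) (w n ^ N2)" using gL unfolding good_def by auto
  define b where "b = P mod ?L"
  define a where "a = P div ?L"
  have P: "P = b + a * ?L" unfolding a_def b_def by (rule mod_div_mult_eq[symmetric])
  define N where "N = N1 + N2"
  have "cg q n (w n ^ (N + b + j * ?L)) (w n ^ (N + b))" for j
  proof (induction j)
    case (Suc j)
    have "cg q n (w n ^ (N + b + j * ?L + ?L)) (w n ^ (N + b + j * ?L))"
      by (rule good_ge[OF N2]) (simp add: N_def)
    moreover have eq: "N + b + Suc j * ?L = N + b + j * ?L + ?L" by simp
    ultimately have "cg q n (w n ^ (N + b + Suc j * ?L)) (w n ^ (N + b + j * ?L))" by (simp only: eq)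
    thus ?case using Suc cg_trans by blast
  qed simp
  hence "cg q n (w n ^ (N + P)) (w n ^ (N + b))" using P by (simp add: add.assoc)
  moreover have "cg q n (w n ^ (N + P)) (w n ^ N)" by (rule good_ge[OF N1]) (simp add: N_def)
  ultimately have "cg q n (w n ^ (N + b)) (w n ^ N)" using cg_sym cg_trans by blast
  hence "b = 0"
  proof (rule contrapos_pp)
    assume "b \<noteq> 0"
    hence "good q n b" unfolding good_def using \<open>cg q n (w n ^ (N + b)) (w n ^ N)\<close> by auto
    hence "?L \<le> b" unfolding Per_def by (rule Least_le)
    moreover have "b < ?L" unfolding b_def using good_pos[OF gL] by simp
    ultimately show "\<not> cg q n (w n ^ (N + b)) (w n ^ N)" by simp
  qed
  thus ?thesis unfolding b_def by auto
qed

lemma good_lift: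
  fixes p :: nat
  assumes g: "good q n P" and pq: "int p dvd q" and p: "2 \<le> p" and pp: "prime p"
  shows "good (int p * q) n (p * P)"
proof -
  obtain N where N: "inI q n (w n ^ N * (w n ^ P - 1))" using g unfolding good_inI by auto
  then obtain a b where ab: "w n ^ N * (w n ^ P - 1) = smult q a + Xn n * b" unfolding inI_def by auto
  have c0: "cg 0 n (w n ^ N * (w n ^ P - 1)) (smult q a)"
    unfolding cg_def ab by (simp add: inI_Xn)
  have d: "int p * q dvd int (p choose k) * q ^ k" if "2 \<le> k" "k \<le> p" for k
  proof (cases "k = p")
    case True
    obtain r where r: "q = int p * r" using pq by auto
    obtain p' where "p = Suc (Suc p')" using p by (metis add_2_eq_Suc le_Suc_ex)
    hence "q ^ p = q * q * q ^ (p - 2)" by simp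
    hence "int p * q dvd q ^ p" unfolding r by (simp add: mult_ac)
    thus ?thesis using True by simp
  next
    case False
    have "p dvd (p choose k)" using that False pp by (intro dvd_choose_prime) auto
    hence "int p dvd int (p choose k)" by simp
    moreover have "q dvd q ^ k" using that by (simp add: dvd_power)
    ultimately show ?thesis by (rule mult_dvd_mono)
  qed
  have "inI (int p * q) n ((w n ^ N) ^ p * ((1 + (w n ^ P - 1)) ^ p - 1) - smult (int p * q) ((w n ^ N) ^ (p - 1) * a))"
    by (rule binom_expand[OF c0]) (use p d in auto)
  moreover have "inI (int p * q) n (smult (int p * q) ((w n ^ N) ^ (p - 1) * a))"
    by (rule inI_smult_dvd) simp
  ultimately have "inI (int p * q) n ((w n ^ N) ^ p * ((1 + (w n ^ P - 1)) ^ p - 1) - smult (int p * q) ((w n ^ N) ^ (p - 1) * a) + smult (int p * q) ((w n ^ N) ^ (p - 1) * a))"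
    by (rule inI_add)
  hence "inI (int p * q) n ((w n ^ N) ^ p * ((1 + (w n ^ P - 1)) ^ p - 1))"
    by (simp only: diff_add_cancel)
  hence "inI (int p * q) n (w n ^ (N * p) * (w n ^ (p * P) - 1))"
    by (simp add: power_mult mult.commute)
  thus ?thesis unfolding good_inI using p good_pos[OF g] by auto
qed



lemma binom2:
  fixes b c :: "int poly"
  assumes L: "1 \<le> L"
    and d: "\<And>k. 2 \<le> k \<Longrightarrow> k \<le> L \<Longrightarrow> t' dvd int (L choose k) * t ^ k"
  shows "inI t' n ((b + smult t c) ^ L - b ^ L - smult (int L * t) (b ^ (L - 1) * c))"
proof -
  have "(smult t c + b) ^ L = (\<Sum>k\<le>L. of_nat (L choose k) * (smult t c) ^ k * b ^ (L - k))"
    by (rule binomial_ring)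
  also have "\<dots> = (\<Sum>k\<le>L. smult (int (L choose k) * t ^ k) (c ^ k * b ^ (L - k)))"
    by (rule sum.cong) (auto simp: of_nat_mult_poly smult_power mult_ac)
  also have "{..L} = insert 0 (insert 1 {2..L})" using L by auto
  finally have e: "(b + smult t c) ^ L = b ^ L + smult (int L * t) (c * b ^ (L - 1)) +
      (\<Sum>k\<in>{2..L}. smult (int (L choose k) * t ^ k) (c ^ k * b ^ (L - k)))"
    by (simp add: add.commute add.assoc)
  have r: "inI t' n (\<Sum>k\<in>{2..L}. smult (int (L choose k) * t ^ k) (c ^ k * b ^ (L - k)))"
    by (rule inI_sum) (auto intro!: inI_smult_dvd d)
  show ?thesis unfolding e using r by (simp add: mult.commute)
qed

lemma powcong:
  fixes p :: nat
  assumes "prime p" "cg (int p) n a b"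
  shows "cg (int p ^ 2) n (a ^ p) (b ^ p)"
proof -
  obtain c e where ce: "a - b = smult (int p) c + Xn n * e" using assms(2) unfolding cg_def inI_def by auto
  have c0: "cg 0 n a (b + smult (int p) c)" unfolding cg_def using ce inI_Xn[of 0 n e]
    by (simp add: algebra_simps)
  have p1: "1 \<le> p" using prime_ge_1_nat[OF assms(1)] by simp
  have i: "inI (int p ^ 2) n ((b + smult (int p) c) ^ p - b ^ p - smult (int p * int p) (b ^ (p - 1) * c))"
  proof (rule binom2[OF p1])
    fix k assume "2 \<le> k" "k \<le> p"
    have "int p ^ 2 dvd int p ^ k" using \<open>2 \<le> k\<close> by (rule le_imp_power_dvd)
    thus "int p ^ 2 dvd int (p choose k) * int p ^ k" by simp
  qed
  have j: "inI (int p ^ 2) n (smult (int p * int p) (b ^ (p - 1) * c))"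
    by (rule inI_smult_dvd) (simp add: power2_eq_square)
  have "cg (int p ^ 2) n ((b + smult (int p) c) ^ p) (b ^ p)"
    unfolding cg_def using inI_add[OF i j] by simp
  moreover have "cg (int p ^ 2) n (a ^ p) ((b + smult (int p) c) ^ p)"
    by (rule cg_zero, rule cg_pow, rule c0)
  ultimately show ?thesis using cg_trans by blast
qed

definition G :: "nat \<Rightarrow> nat \<Rightarrow> int poly" where
  "G p b = (\<Sum>k\<in>{1..<p}. monom (int ((p choose k) div p)) (b * k))"

lemma frob_exact:
  fixes p :: nat
  assumes "prime p"
  shows "(1 + monom 1 b) ^ p = 1 + monom 1 (b * p) + smult (int p) (G p b)"
proof -
  have p: "2 \<le> p" using prime_ge_2_nat[OF assms] .
  have "(monom 1 b + 1) ^ p = (\<Sum>k\<le>p. of_nat (p choose k) * (monom 1 b) ^ k * 1 ^ (p - k))"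
    by (rule binomial_ring)
  also have "\<dots> = (\<Sum>k\<le>p. monom (int (p choose k)) (b * k))"
    by (rule sum.cong) (auto simp: of_nat_mult_poly monom_power smult_monom)
  also have "{..p} = insert 0 (insert p {1..<p})" using p by auto
  finally have e: "(1 + monom 1 b) ^ p = 1 + monom 1 (b * p) + (\<Sum>k\<in>{1..<p}. monom (int (p choose k)) (b * k))"
    using p by (simp add: add.commute add.assoc monom_eq_1)
  have "(\<Sum>k\<in>{1..<p}. monom (int (p choose k)) (b * k)) = smult (int p) (G p b)"
    unfolding G_def smult_sum_r
  proof (rule sum.cong[OF refl])
    fix k assume "k \<in> {1..<p}"
    hence "p dvd (p choose k)" using assms by (intro dvd_choose_prime) auto
    hence "int (p choose k) = int p * int ((p choose k) div p)"
      using dvd_mult_div_cancel by (metis of_nat_mult)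
    thus "monom (int (p choose k)) (b * k) = smult (int p) (monom (int ((p choose k) div p)) (b * k))"
      by (simp add: smult_monom)
  qed
  thus ?thesis using e by simp
qed

lemma frob:
  fixes p :: nat
  assumes "prime p"
  shows "cg (int p) n ((1 + monom 1 b) ^ (p ^ j)) (1 + monom 1 (b * p ^ j))"
proof (induction j)
  case (Suc j)
  have "cg (int p) n (((1 + monom 1 b) ^ (p ^ j)) ^ p) ((1 + monom 1 (b * p ^ j)) ^ p)"
    by (rule cg_pow[OF Suc])
  moreover have "cg (int p) n ((1 + monom 1 (b * p ^ j)) ^ p) (1 + monom 1 (b * p ^ Suc j))"
    unfolding frob_exact[OF assms] cg_def
    by (simp add: inI_smult_dvd mult.assoc mult.commute[of p])
  ultimately show ?case by (simp add: power_mult[symmetric] mult.commute[of p] cg_trans)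
qed simp



lemma good_exists:
  fixes p e m n :: nat
  assumes pp: "prime p" and nd: "n = p ^ e * m" and pm: "\<not> p dvd m" and n: "0 < n"
  shows "good (int p) n (p ^ e * (p ^ totient m - 1))"
proof -
  define r where "r = totient m"
  define s where "s = n - 1"
  have m: "0 < m" using n nd by (cases m) auto
  have r: "0 < r" using m unfolding r_def by simp
  have cop: "coprime p m" using pp pm by (simp add: prime_imp_coprime)
  have "[p ^ r = 1] (mod m)" unfolding r_def by (rule euler_theorem[OF cop])
  hence "m dvd p ^ r - 1" by (rule cong_to_1_nat)
  then obtain u where u: "p ^ r - 1 = m * u" by auto
  have p1: "1 < p" using prime_gt_1_nat[OF pp] .
  have pr1: "1 < p ^ r" using one_less_power[OF p1] r by blast
  have pr: "p ^ r = 1 + m * u" using u pr1 by simp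
  have w: "w n = 1 + monom 1 s" unfolding w_def s_def by simp
  have c1: "cg (int p) n (w n ^ (p ^ (e + r))) (1 + monom 1 (s * p ^ (e + r)))"
    unfolding w by (rule frob[OF pp])
  have c2: "cg (int p) n (w n ^ (p ^ e)) (1 + monom 1 (s * p ^ e))"
    unfolding w by (rule frob[OF pp])
  have "s * p ^ (e + r) = s * p ^ e + n * (s * u)"
    by (simp add: power_add pr nd algebra_simps)
  hence "cg 0 n (1 + monom 1 (s * p ^ (e + r))) (1 + monom 1 (s * p ^ e))"
    unfolding cg_def using monom_cong[where c=1 and i="s * p ^ e" and n=n and t="s * u"] by simp
  hence "cg (int p) n (w n ^ (p ^ (e + r))) (w n ^ (p ^ e))"
    using c1 c2 cg_zero cg_sym cg_trans by meson
  moreover have "p ^ (e + r) = p ^ e + p ^ e * (p ^ r - 1)" using pr1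
    by (simp add: power_add algebra_simps)
  moreover have "0 < p ^ e * (p ^ r - 1)" using pr1 p1 by simp
  ultimately show ?thesis unfolding good_def r_def by auto
qed

lemma lift:
  fixes p :: nat
  assumes pp: "prime p" and p3: "3 \<le> p" and n: "0 < n" and g: "good (int p) n Q"
    and key: "\<And>M. \<not> inI (int p ^ 2) n (w n ^ M * (w n ^ Q - 1))"
  shows "\<not> good (int p ^ (j + 2)) n (p ^ j * Q)"
proof -
  have claim: "\<exists>N H. cg 0 n (w n ^ N * (w n ^ (p ^ j * Q) - 1)) (smult (int p ^ (j + 1)) H) \<and>
      (\<forall>M. \<not> inI (int p) n (w n ^ M * H))" for j
  proof (induction j)
    case 0
    obtain N where "inI (int p) n (w n ^ N * (w n ^ Q - 1))" using g unfolding good_inI by auto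
    then obtain a b where ab: "w n ^ N * (w n ^ Q - 1) = smult (int p) a + Xn n * b"
      unfolding inI_def by auto
    have c: "cg 0 n (w n ^ N * (w n ^ Q - 1)) (smult (int p) a)"
      unfolding cg_def ab by (simp add: inI_Xn)
    have nk: "\<not> inI (int p) n (w n ^ M * a)" for M
    proof
      assume "inI (int p) n (w n ^ M * a)"
      hence i: "inI (int p * int p) n (smult (int p) (w n ^ M * a))" by (rule inI_smult)
      have "cg 0 n (w n ^ M * (w n ^ N * (w n ^ Q - 1))) (w n ^ M * smult (int p) a)"
        by (rule cg_mult[OF cg_refl c])
      hence "cg 0 n (w n ^ (M + N) * (w n ^ Q - 1)) (smult (int p) (w n ^ M * a))"
        by (simp add: power_add mult.assoc)
      hence "cg (int p * int p) n (w n ^ (M + N) * (w n ^ Q - 1)) (smult (int p) (w n ^ M * a))"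
        by (rule cg_zero)
      hence "inI (int p * int p) n (w n ^ (M + N) * (w n ^ Q - 1))" using i cg_inI by blast
      thus False using key[of "M + N"] by (simp add: power2_eq_square)
    qed
    show ?case using c nk by auto
  next
    case (Suc j)
    then obtain N H where c: "cg 0 n (w n ^ N * (w n ^ (p ^ j * Q) - 1)) (smult (int p ^ (j + 1)) H)"
      and nk: "\<And>M. \<not> inI (int p) n (w n ^ M * H)" by blast
    let ?W = "w n ^ N" and ?F = "w n ^ (p ^ j * Q) - 1" and ?t = "int p ^ (j + 1)"
    have p1: "1 \<le> p" using p3 by simp
    have d: "int p ^ (j + 3) dvd int (p choose k) * ?t ^ k" if k: "2 \<le> k" "k \<le> p" for k
    proof (cases "k = p")
      case True
      have "(j + 1) * 3 \<le> (j + 1) * p" using p3 by (rule mult_le_mono2)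
      hence "j + 3 \<le> (j + 1) * p" by simp
      hence "int p ^ (j + 3) dvd int p ^ ((j + 1) * k)" using True by (intro le_imp_power_dvd) simp
      moreover have "?t ^ k = int p ^ ((j + 1) * k)" by (simp only: power_mult)
      ultimately have "int p ^ (j + 3) dvd ?t ^ k" by simp
      thus ?thesis by (rule dvd_mult)
    next
      case False
      have "p dvd (p choose k)" using k False pp by (intro dvd_choose_prime) auto
      hence a: "int p dvd int (p choose k)" by simp
      have "(j + 1) * 2 \<le> (j + 1) * k" using k(1) by (rule mult_le_mono2)
      hence "j + 2 \<le> (j + 1) * k" by simp
      hence "int p ^ (j + 2) dvd int p ^ ((j + 1) * k)" by (intro le_imp_power_dvd)
      moreover have "?t ^ k = int p ^ ((j + 1) * k)" by (simp only: power_mult)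
      ultimately have b: "int p ^ (j + 2) dvd ?t ^ k" by simp
      have "int p * int p ^ (j + 2) dvd int (p choose k) * ?t ^ k" by (rule mult_dvd_mono[OF a b])
      moreover have "j + 3 = Suc (j + 2)" by simp
      hence "int p ^ (j + 3) = int p * int p ^ (j + 2)" by (simp only: power_Suc)
      ultimately show ?thesis by (simp only:)
    qed
    have be: "inI (int p ^ (j + 3)) n (?W ^ p * ((1 + ?F) ^ p - 1) - smult (int p * ?t) (?W ^ (p - 1) * H))"
      by (rule binom_expand[OF c p1 d])
    then obtain a b where ab: "?W ^ p * ((1 + ?F) ^ p - 1) - smult (int p * ?t) (?W ^ (p - 1) * H) = smult (int p ^ (j + 3)) a + Xn n * b"
      unfolding inI_def by blast
    have e1: "?W ^ p * ((1 + ?F) ^ p - 1) = w n ^ (N * p) * (w n ^ (p ^ Suc j * Q) - 1)"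
    proof -
      have ex: "p ^ j * Q * p = p ^ Suc j * Q" by (simp add: mult_ac)
      have "(1 + ?F) ^ p = w n ^ (p ^ j * Q * p)" by (simp add: power_mult)
      hence "(1 + ?F) ^ p = w n ^ (p ^ Suc j * Q)" by (simp only: ex)
      moreover have "?W ^ p = w n ^ (N * p)" by (rule power_mult[symmetric])
      ultimately show ?thesis by simp
    qed
    define H' where "H' = ?W ^ (p - 1) * H + smult (int p) a"
    have "?W ^ p * ((1 + ?F) ^ p - 1) = smult (int p ^ (Suc j + 1)) H' + Xn n * b"
    proof -
      have "smult (int p * ?t) (?W ^ (p - 1) * H) + smult (int p ^ (j + 3)) a = smult (int p ^ (Suc j + 1)) H'"
      proof -
        have e3: "int p ^ (j + 3) = int p ^ j * (int p * int p * int p)" by (simp add: power_add power3_eq_cube)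
        show ?thesis unfolding H'_def by (simp add: smult_add_right e3 mult_ac)
      qed
      moreover from ab have "?W ^ p * ((1 + ?F) ^ p - 1) = (smult (int p * ?t) (?W ^ (p - 1) * H) + smult (int p ^ (j + 3)) a) + Xn n * b"
        by (simp add: diff_eq_eq algebra_simps)
      ultimately show ?thesis by simp
    qed
    hence c': "cg 0 n (w n ^ (N * p) * (w n ^ (p ^ Suc j * Q) - 1)) (smult (int p ^ (Suc j + 1)) H')"
      unfolding e1[symmetric] cg_def by (simp add: inI_Xn)
    have nk': "\<not> inI (int p) n (w n ^ M * H')" for M
    proof
      assume i: "inI (int p) n (w n ^ M * H')"
      have "inI (int p) n (w n ^ M * smult (int p) a)" by (rule inI_mult, rule inI_smult_dvd) simp
      hence "inI (int p) n (w n ^ M * H' - w n ^ M * smult (int p) a)" using i inI_diff by blast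
      moreover have "w n ^ M * H' - w n ^ M * smult (int p) a = w n ^ (M + N * (p - 1)) * H"
      proof -
        have "w n ^ M * H' - w n ^ M * smult (int p) a = w n ^ M * (?W ^ (p - 1)) * H"
          unfolding H'_def by (simp add: distrib_left mult.assoc)
        also have "?W ^ (p - 1) = w n ^ (N * (p - 1))" by (rule power_mult[symmetric])
        finally show ?thesis by (simp add: power_add)
      qed
      ultimately have "inI (int p) n (w n ^ (M + N * (p - 1)) * H)" by simp
      thus False using nk by blast
    qed
    show ?case using c' nk' by blast
  qed
  show ?thesis
  proof
    assume "good (int p ^ (j + 2)) n (p ^ j * Q)"
    then obtain M0 where M0: "inI (int p ^ (j + 2)) n (w n ^ M0 * (w n ^ (p ^ j * Q) - 1))"
      unfolding good_inI by auto
    obtain N H where c: "cg 0 n (w n ^ N * (w n ^ (p ^ j * Q) - 1)) (smult (int p ^ (j + 1)) H)"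
      and nk: "\<And>M. \<not> inI (int p) n (w n ^ M * H)" using claim by blast
    have i: "inI (int p ^ (j + 2)) n (w n ^ M0 * (w n ^ N * (w n ^ (p ^ j * Q) - 1)))"
      using inI_mult[OF M0, of "w n ^ N"] by (simp add: mult_ac)
    have "cg (int p ^ (j + 2)) n (w n ^ M0 * (w n ^ N * (w n ^ (p ^ j * Q) - 1))) (smult (int p ^ (j + 1)) (w n ^ M0 * H))"
      using cg_zero[OF cg_mult[OF cg_refl c, of "w n ^ M0"]] by simp
    hence "inI (int p ^ (j + 2)) n (smult (int p ^ (j + 1)) (w n ^ M0 * H))"
      using cg_inI i by blast
    moreover have "int p ^ (j + 2) = int p ^ (j + 1) * int p" by simp
    ultimately have "inI (int p ^ (j + 1) * int p) n (smult (int p ^ (j + 1)) (w n ^ M0 * H))"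
      by (simp only:)
    hence "inI (int p) n (w n ^ M0 * H)" by (rule inI_cancel2[OF n]) (use pp in simp)
    thus False using nk by blast
  qed
qed



lemma pe_split: "0 < e \<Longrightarrow> (p::nat) ^ e = p ^ (e - 1) * p"
  by (cases e) auto

lemma mod_mult_eq_self:
  fixes p e s k :: nat
  assumes pp: "prime p" and e: "0 < e" and ps: "\<not> p dvd s" and k: "1 \<le> k" "k < p"
    and eq: "(s * p ^ (e - 1) * k) mod p ^ e = (s * p ^ (e - 1)) mod p ^ e"
  shows "k = 1"
proof -
  let ?b = "s * p ^ (e - 1)"
  have "[?b * k = ?b] (mod p ^ e)" using eq by (simp add: cong_def)
  moreover have "?b \<le> ?b * k" using k by simp
  ultimately have d: "p ^ e dvd ?b * k - ?b" by (simp add: cong_altdef_nat)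
  have "?b * k - ?b = ?b * (k - 1)" by (simp add: diff_mult_distrib2)
  also have "\<dots> = p ^ (e - 1) * (s * (k - 1))" by (simp add: mult_ac)
  finally have "p ^ (e - 1) * p dvd p ^ (e - 1) * (s * (k - 1))" using d pe_split[OF e, of p] by simp
  hence "p dvd s * (k - 1)" using prime_gt_0_nat[OF pp] by (simp add: nat_mult_dvd_cancel1)
  hence "p dvd (k - 1)" using ps pp by (simp add: prime_dvd_mult_iff)
  moreover have "k - 1 < p" using k by simp
  ultimately have "k - 1 = 0" using dvd_imp_le by fastforce
  thus ?thesis using k by simp
qed

lemma b_mod_nonzero:
  fixes p e s :: nat
  assumes pp: "prime p" and e: "0 < e" and ps: "\<not> p dvd s"
  shows "(s * p ^ (e - 1)) mod p ^ e \<noteq> 0"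
proof
  assume "(s * p ^ (e - 1)) mod p ^ e = 0"
  hence "p ^ e dvd s * p ^ (e - 1)" by (rule mod_0_imp_dvd)
  hence "p ^ (e - 1) * p dvd p ^ (e - 1) * s" unfolding pe_split[OF e, of p] by (simp only: mult.commute)
  hence "p dvd s" using prime_gt_0_nat[OF pp] by (simp add: nat_mult_dvd_cancel1)
  thus False using ps by simp
qed

lemma coeff_red_G:
  fixes p e s :: nat
  assumes pp: "prime p" and e: "0 < e" and ps: "\<not> p dvd s"
  shows "coeff (red (p ^ e) (G p (s * p ^ (e - 1)))) ((s * p ^ (e - 1)) mod p ^ e) = 1"
proof -
  let ?b = "s * p ^ (e - 1)" and ?d = "p ^ e"
  have p2: "2 \<le> p" using prime_ge_2_nat[OF pp] .
  have "coeff (red ?d (G p ?b)) (?b mod ?d) =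
      (\<Sum>k\<in>{1..<p}. if (?b * k) mod ?d = ?b mod ?d then int ((p choose k) div p) else 0)"
    unfolding G_def red_sum red_monom coeff_sum by (rule sum.cong) (auto simp: coeff_monom)
  also have "\<dots> = (\<Sum>k\<in>{1..<p}. if k = 1 then 1 else 0)"
  proof (rule sum.cong[OF refl])
    fix k assume k: "k \<in> {1..<p}"
    show "(if (?b * k) mod ?d = ?b mod ?d then int ((p choose k) div p) else 0) = (if k = 1 then 1 else 0)"
      using mod_mult_eq_self[OF pp e ps, of k] k prime_gt_0_nat[OF pp] by auto
  qed
  also have "\<dots> = 1" using p2 by simp
  finally show ?thesis .
qed

lemma poly_w1: "poly (w n) 1 = 2"
  by (simp add: w_def poly_monom)

lemma key:
  fixes p e m n L Q M :: nat
  assumes pp: "prime p" and p3: "3 \<le> p" and nw: "\<not> wieferich p" and nd: "n = p ^ e * m"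
    and n: "0 < n" and pL: "\<not> p dvd L" and QL: "Q dvd p ^ e * L"
  shows "\<not> inI (int p ^ 2) n (w n ^ M * (w n ^ Q - 1))"
proof
  assume I: "inI (int p ^ 2) n (w n ^ M * (w n ^ Q - 1))"
  have cop2: "coprime (int p) 2"
  proof -
    have "\<not> p dvd 2" using p3 by (auto dest: dvd_imp_le)
    hence "coprime p 2" by (rule prime_imp_coprime[OF pp])
    hence "coprime (int p) (int 2)" by (simp only: coprime_int_iff)
    thus ?thesis by simp
  qed
  show False
  proof (cases "e = 0")
    case True
    have "int p ^ 2 dvd poly (w n ^ M * (w n ^ Q - 1)) 1" by (rule inI_eval1[OF I])
    hence "int p ^ 2 dvd 2 ^ M * (2 ^ Q - 1)" by (simp add: poly_w1)
    moreover have "coprime (int p ^ 2) (2 ^ M)" using cop2 by simp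
    ultimately have d1: "int p ^ 2 dvd 2 ^ Q - 1" by (simp add: coprime_dvd_mult_right_iff)
    obtain c where c: "L = Q * c" using QL True by auto
    have "(2::int) ^ Q - 1 dvd (2 ^ Q) ^ c - 1" by (rule one_dvd_pow)
    hence "int p ^ 2 dvd 2 ^ L - 1" using d1 c by (simp add: power_mult dvd_trans)
    hence "[int (2 ^ L) = int 1] (mod int (p ^ 2))" by (simp add: cong_iff_dvd_diff)
    hence "[2 ^ L = 1] (mod p ^ 2)" by (simp only: cong_int_iff)
    hence o1: "ord (p ^ 2) 2 dvd L" by (rule ord_divides[THEN iffD1])
    have "coprime 2 (p ^ 2)" using cop2 by (simp add: coprime_commute)
    hence "[2 ^ totient (p ^ 2) = 1] (mod p ^ 2)" by (rule euler_theorem)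
    moreover have "totient (p ^ 2) = p * (p - 1)" using totient_prime_power[OF pp, of 2] by simp
    ultimately have "[2 ^ (p * (p - 1)) = 1] (mod p ^ 2)" by simp
    hence o2: "ord (p ^ 2) 2 dvd p * (p - 1)" by (rule ord_divides[THEN iffD1])
    have "\<not> p dvd ord (p ^ 2) 2" using o1 pL dvd_trans by blast
    hence "coprime (ord (p ^ 2) 2) p" using pp by (simp add: prime_imp_coprime coprime_commute)
    hence "ord (p ^ 2) 2 dvd p - 1" using o2 by (simp add: coprime_dvd_mult_right_iff)
    hence "[2 ^ (p - 1) = 1] (mod p ^ 2)" by (rule ord_divides[THEN iffD2])
    thus False using nw pp unfolding wieferich_def by simp
  next
    case False
    hence e: "0 < e" by simp
    define d where "d = p ^ e"
    define s where "s = n - 1"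
    define b where "b = s * p ^ (e - 1)"
    define G' where "G' = G p b"
    have p0: "0 < p" using prime_gt_0_nat[OF pp] .
    have d0: "0 < d" using p0 by (simp add: d_def)
    have dn: "d dvd n" using nd by (simp add: d_def)
    have "p dvd p ^ e" using e by (simp add: dvd_power)
    hence pn: "p dvd n" using nd by simp
    have ps: "\<not> p dvd s"
    proof
      assume "p dvd s"
      hence "p dvd n - s" using pn by (rule dvd_diff_nat[rotated])
      moreover have "n - s = 1" using n by (simp add: s_def)
      ultimately show False using pp by simp
    qed
    have wn: "w n = 1 + monom 1 s" by (simp add: w_def s_def)
    have I': "inI (int p ^ 2) d (w n ^ M * (w n ^ Q - 1))" by (rule inI_quot[OF dn I])
    have c1: "cg (int p) d (w n ^ (p ^ (e - 1))) (1 + monom 1 b)"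
      unfolding wn b_def by (rule frob[OF pp])
    have c2: "cg (int p ^ 2) d ((w n ^ (p ^ (e - 1))) ^ p) ((1 + monom 1 b) ^ p)"
      by (rule powcong[OF pp c1])
    have pw: "(w n ^ (p ^ (e - 1))) ^ p = w n ^ (p ^ e)"
    proof -
      have "(w n ^ (p ^ (e - 1))) ^ p = w n ^ (p ^ (e - 1) * p)" by (rule power_mult[symmetric])
      also have "p ^ (e - 1) * p = p ^ e" by (rule pe_split[OF e, symmetric])
      finally show ?thesis .
    qed
    have "b * p = 0 + d * s" by (simp add: b_def d_def pe_split[OF e, of p] mult_ac)
    hence c3: "cg 0 d (monom 1 (b * p)) 1"
      unfolding cg_def using monom_cong[where c=1 and i=0 and n=d and t=s] by (simp add: monom_eq_1)
    let ?A = "2 + smult (int p) G'" and ?B = "2 - smult (int p) G'"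
    have "cg 0 d ((1 + monom 1 b) ^ p) (1 + 1 + smult (int p) G')"
      unfolding frob_exact[OF pp] G'_def by (intro cg_add cg_refl c3)
    hence "cg (int p ^ 2) d ((1 + monom 1 b) ^ p) (1 + 1 + smult (int p) G')" by (rule cg_zero)
    moreover have "(1 + 1 + smult (int p) G' :: int poly) = ?A" by simp
    ultimately have "cg (int p ^ 2) d ((1 + monom 1 b) ^ p) ?A" by simp
    hence cA: "cg (int p ^ 2) d (w n ^ (p ^ e)) ?A" using c2 pw cg_trans by metis
    have AB: "?A * ?B = 4 - smult (int p ^ 2) (G' * G')"
      by (simp add: algebra_simps power2_eq_square)
    have cAB: "cg (int p ^ 2) d (?A * ?B) 4"
      unfolding AB cg_def by (simp add: inI_neg inI_smult_dvd)
    have i0: "inI (int p ^ 2) d (w n ^ (M * (p ^ e - 1)) * (w n ^ M * (w n ^ Q - 1)))"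
      by (rule inI_mult[OF I'])
    have eq: "w n ^ (M * (p ^ e - 1)) * (w n ^ M * (w n ^ Q - 1)) = (w n ^ (p ^ e)) ^ M * (w n ^ Q - 1)"
    proof -
      have "M * (p ^ e - 1) + M = p ^ e * M" using p0 by (simp add: algebra_simps)
      thus ?thesis by (simp add: power_add[symmetric] power_mult[symmetric] mult.assoc)
    qed
    have i1: "inI (int p ^ 2) d ((w n ^ (p ^ e)) ^ M * (w n ^ Q - 1))" using i0 unfolding eq .
    have "cg (int p ^ 2) d ((w n ^ (p ^ e)) ^ M * (w n ^ Q - 1)) (?A ^ M * (w n ^ Q - 1))"
      by (intro cg_mult cg_pow cA cg_refl)
    hence "inI (int p ^ 2) d (?A ^ M * (w n ^ Q - 1))" using i1 cg_inI by blast
    hence "inI (int p ^ 2) d (?B ^ M * (?A ^ M * (w n ^ Q - 1)))" by (rule inI_mult)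
    hence i2: "inI (int p ^ 2) d ((?A * ?B) ^ M * (w n ^ Q - 1))" by (simp add: power_mult_distrib mult_ac)
    have "cg (int p ^ 2) d ((?A * ?B) ^ M * (w n ^ Q - 1)) (4 ^ M * (w n ^ Q - 1))"
      by (intro cg_mult cg_pow cAB cg_refl)
    hence "inI (int p ^ 2) d (4 ^ M * (w n ^ Q - 1))" using i2 cg_inI by blast
    moreover have "(4::int poly) ^ M = [:4 ^ M:]" by (simp add: numeral_poly poly_const_pow)
    ultimately have i3: "inI (int p ^ 2) d (smult (4 ^ M) (w n ^ Q - 1))" by simp
    have "coprime (2::int) (int p ^ 2)" using cop2 by (simp add: coprime_commute)
    hence "coprime ((2::int) ^ (2 * M)) (int p ^ 2)" by simp
    hence "coprime ((4::int) ^ M) (int p ^ 2)" by (simp add: power_mult)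
    hence "inI (int p ^ 2) d (w n ^ Q - 1)" by (rule inI_cancel[OF d0 i3])
    hence cQ: "cg (int p ^ 2) d (w n ^ Q) 1" by (simp add: cg_def)
    obtain c where c: "p ^ e * L = Q * c" using QL by auto
    have "cg (int p ^ 2) d ((w n ^ Q) ^ c) (1 ^ c)" by (rule cg_pow[OF cQ])
    hence "cg (int p ^ 2) d ((w n ^ (p ^ e)) ^ L) 1" by (simp add: power_mult[symmetric] c)
    moreover have "cg (int p ^ 2) d ((w n ^ (p ^ e)) ^ L) (?A ^ L)" by (rule cg_pow[OF cA])
    ultimately have cL: "cg (int p ^ 2) d (?A ^ L) 1" using cg_sym cg_trans by blast
    have L1: "1 \<le> L" using pL by (cases L) auto
    have bi: "inI (int p ^ 2) d (?A ^ L - 2 ^ L - smult (int L * int p) (2 ^ (L - 1) * G'))"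
    proof (rule binom2[OF L1])
      fix k assume "2 \<le> k" "k \<le> L"
      have "int p ^ 2 dvd int p ^ k" using \<open>2 \<le> k\<close> by (rule le_imp_power_dvd)
      thus "int p ^ 2 dvd int (L choose k) * int p ^ k" by simp
    qed
    have "inI (int p ^ 2) d ((?A ^ L - 1) - (?A ^ L - 2 ^ L - smult (int L * int p) (2 ^ (L - 1) * G')))"
      using cL bi unfolding cg_def by (rule inI_diff)
    moreover have "(2::int poly) ^ L = [:2 ^ L:]" "(2::int poly) ^ (L - 1) = [:2 ^ (L - 1):]"
      by (simp_all add: numeral_poly poly_const_pow)
    ultimately have i4: "inI (int p ^ 2) d ([:2 ^ L:] + smult (int L * int p * 2 ^ (L - 1)) G' - 1)"
      by (simp add: mult_ac)
    have eq4: "[:2 ^ L:] + smult (int L * int p * 2 ^ (L - 1)) G' - 1 = monom (2 ^ L - 1) 0 + smult (int L * int p * 2 ^ (L - 1)) G'"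
      by (rule poly_eqI) (auto simp: coeff_pCons coeff_1 coeff_monom split: nat.split)
    have "inI (int p ^ 2) d (monom (2 ^ L - 1) 0 + smult (int L * int p * 2 ^ (L - 1)) G')"
      using i4 unfolding eq4 .
    hence "int p ^ 2 dvd coeff (red d (monom (2 ^ L - 1) 0 + smult (int L * int p * 2 ^ (L - 1)) G')) (b mod d)"
      using inI_iff[OF d0] by blast
    moreover have "coeff (red d G') (b mod d) = 1"
      unfolding G'_def d_def b_def by (rule coeff_red_G[OF pp e ps])
    moreover have "b mod d \<noteq> 0" unfolding b_def d_def by (rule b_mod_nonzero[OF pp e ps])
    ultimately have "int p ^ 2 dvd int L * int p * 2 ^ (L - 1)"
      by (simp add: red_add red_smult red_monom coeff_monom)
    hence "int p * int p dvd (int L * 2 ^ (L - 1)) * int p" by (simp add: power2_eq_square mult_ac)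
    hence "int p dvd int L * 2 ^ (L - 1)" using p0 by simp
    moreover have "prime (int p)" using pp by simp
    ultimately have "int p dvd int L \<or> int p dvd 2 ^ (L - 1)" by (simp add: prime_dvd_mult_iff)
    moreover have "\<not> int p dvd int L" using pL by simp
    moreover have "\<not> int p dvd 2 ^ (L - 1)"
    proof
      assume "int p dvd 2 ^ (L - 1)"
      hence "int p dvd 2" using \<open>prime (int p)\<close> prime_dvd_power by blast
      thus False using cop2 p3 by (metis coprime_absorb_left not_prime_unit pp prime_nat_int_transfer)
    qed
    ultimately show False by blast
  qed
qed



lemma factor_out:
  fixes p n :: nat
  assumes pp: "prime p" and n: "0 < n"
  shows "\<exists>e m. n = p ^ e * m \<and> \<not> p dvd m"
  using n
proof (induction n rule: less_induct)
  case (less n)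
  show ?case
  proof (cases "p dvd n")
    case True
    then obtain n' where n': "n = p * n'" by auto
    have "0 < n'" using less.prems n' by simp
    moreover have "n' < n" using n' less.prems prime_gt_1_nat[OF pp] by simp
    ultimately obtain e m where "n' = p ^ e * m" "\<not> p dvd m" using less.IH by blast
    hence "n = p ^ Suc e * m \<and> \<not> p dvd m" using n' by simp
    thus ?thesis by blast
  next
    case False
    hence "n = p ^ 0 * n \<and> \<not> p dvd n" by simp
    thus ?thesis by blast
  qed
qed

lemma good_chain:
  fixes p :: nat
  assumes pp: "prime p" and g: "good (int p) n Q"
  shows "good (int p ^ (j + 1)) n (p ^ j * Q)"
proof (induction j)
  case 0 thus ?case using g by simp
next
  case (Suc j)
  have "good (int p * int p ^ (j + 1)) n (p * (p ^ j * Q))"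
    by (rule good_lift[OF Suc]) (use prime_ge_2_nat[OF pp] pp in auto)
  thus ?case by (simp add: mult_ac)
qed

theorem theorem5p10:
  fixes p k n :: nat
  assumes "prime p" and "p \<ge> 3" and "\<not> wieferich p"
    and "k > 0" and "n > 0"
  shows "Pmax (p ^ k) n = p ^ (k - 1) * Pmax p n"
proof -
  note pp = assms(1) and p3 = assms(2) and nw = assms(3) and k = assms(4) and n = assms(5)
  obtain e m where nd: "n = p ^ e * m" and pm: "\<not> p dvd m" using factor_out[OF pp n] by blast
  define L where "L = p ^ totient m - 1"
  have m0: "0 < m" using n nd by (cases m) auto
  have gE: "good (int p) n (p ^ e * L)" unfolding L_def by (rule good_exists[OF pp nd pm n])
  have pL: "\<not> p dvd L"
  proof
    assume a: "p dvd L"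
    have "p dvd p ^ totient m" using m0 by (simp add: dvd_power)
    hence "p dvd p ^ totient m - L" using a by (rule dvd_diff_nat)
    moreover have "p ^ totient m - L = 1" unfolding L_def using prime_gt_0_nat[OF pp] by simp
    ultimately show False using pp by simp
  qed
  define Q where "Q = Per (int p) n"
  have gQ: "good (int p) n Q" unfolding Q_def by (rule good_Per[OF gE])
  have QL: "Q dvd p ^ e * L" unfolding Q_def by (rule Per_dvd[OF gE])
  have key': "\<And>M. \<not> inI (int p ^ 2) n (w n ^ M * (w n ^ Q - 1))"
    by (rule key[OF pp p3 nw nd n pL QL])
  have Q0: "0 < Q" using good_pos[OF gQ] .
  define R where "R = Per (int p ^ k) n"
  have gk: "good (int p ^ k) n (p ^ (k - 1) * Q)"
    using good_chain[OF pp gQ, of "k - 1"] k by simp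
  have gR: "good (int p ^ k) n R" unfolding R_def by (rule good_Per[OF gk])
  have Rd: "R dvd p ^ (k - 1) * Q" unfolding R_def by (rule Per_dvd[OF gk])
  have "good (int p) n R" by (rule good_dvd[OF gR]) (use k in \<open>simp add: dvd_power\<close>)
  hence "Q dvd R" unfolding Q_def by (rule Per_dvd)
  then obtain x where x: "R = Q * x" by auto
  have "x dvd p ^ (k - 1)" using Rd Q0 unfolding x by (simp add: mult.commute)
  then obtain i where i: "i \<le> k - 1" "x = p ^ i" using divides_primepow_nat[OF pp] by blast
  have "i = k - 1"
  proof (rule ccontr)
    assume "i \<noteq> k - 1"
    hence ik: "i + 1 \<le> k - 1" using i by simp
    define j where "j = k - 2"
    have kj: "k = j + 2" using ik unfolding j_def by simp
    have "good (int p ^ k) n (p ^ (j - i) * (Q * p ^ i))"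
      by (rule good_mult) (use gR x i prime_gt_0_nat[OF pp] in auto)
    moreover have "p ^ (j - i) * (Q * p ^ i) = p ^ j * Q"
      using ik kj by (simp add: mult_ac power_add[symmetric])
    ultimately have "good (int p ^ (j + 2)) n (p ^ j * Q)" using kj by simp
    thus False using lift[OF pp p3 n gQ key'] by blast
  qed
  hence R: "R = p ^ (k - 1) * Q" using x i by simp
  have "1 < p ^ k" using one_less_power[OF prime_gt_1_nat[OF pp] k] .
  hence "Pmax (p ^ k) n = Per (int (p ^ k)) n" using gk by (intro Pmax_Per) (auto simp: n)
  hence P1: "Pmax (p ^ k) n = R" unfolding R_def by simp
  have "Pmax p n = Per (int p) n" by (rule Pmax_Per[OF prime_gt_1_nat[OF pp] n gQ])
  thus ?thesis using P1 R unfolding Q_def by simp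
qed

end
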